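(* In the discrete scheme described in the context, let $M'=\max_j|\theta^n_j|+\max_j|q^n_j|$. There is a constant $C>0$ depending only on $M'$, $T$ and $Q^{sat}$ such that for all $s<t$ in $[0,T)$ and all $z\in[0,1)$, $$(F^n(t,z)-F^n(s,z))^+\le C\big(\hat\theta^n(t,z)-\hat\theta^n(s,z)\big).$$
   Context: $Q^{sat}:\mathbb{R}^3\to\mathbb{R}$ is smooth with $\partial_\theta Q^{sat}>0$, $\partial_zQ^{sat}<0$. $\Theta(w,z,t)$ is the solution $\theta$ of $\theta+Q^{sat}(\theta,z,t)=w$ (assumed well defined), with $\partial_w\Theta>0$, $\partial_z\Theta>0$. Discrete scheme. Fix $T>0$, $n\ge1$, $\delta t>0$, $z_i=i/n$, $J_i=[\frac{i-1}n,\frac in)$. There are $n$ parcels $j=1,\dots,n$; initially parcel $j$ is at position $j$ with value $\theta^n_j$, where $\theta^n_1\le\dots\le\theta^n_n$ and $q^n_j\le Q^{sat}(\theta^n_j,z_j,0)$; parcel $j$ carries the fixed number $\theta^M_j=\theta^n_j+q^n_j$. One time step from $k\delta t$ to $(k+1)\delta t$, with $\tau=(k+1)\delta t$: positions $m=n,\dots,1$ are processed in this order. At stage $m$, with current configuration (parcel $p(i)$ at position $i$ with value $\vartheta_i$), position $i$ is wet if $\vartheta_i<\Theta(\theta^M_{p(i)},z_i,\tau)$; a wet position $i_0\le m$ is eligible if for every $i$ with $i_0<i\le m$, either $i$ is not wet and $\vartheta_i<\Theta(\theta^M_{p(i_0)},z_i,\tau)$, or $i$ is wet and $\theta^M_{p(i_0)}>\theta^M_{p(i)}$.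 If some position is eligible, let $i_*$ be the eligible position whose parcel has the largest $\theta^M$ (largest position in case of ties); that parcel moves to position $m$ with new value $\Theta(\theta^M_{p(i_* )},z_m,\tau)$, the parcels at $i_*+1,\dots,m$ move down one position keeping their values, others unchanged; otherwise nothing changes. After stage $1$ one has the configuration at time $(k+1)\delta t$. $\alpha_{k\delta t}(j)$ is the position of parcel $j$ after $k$ steps, $\theta^n_i(k\delta t)$ the value at position $i$. For $k\delta t\le t<(k+1)\delta t$ and $z\in J_j$: $\theta^n(t,z)=\theta^n_j(k\delta t)$, $F^n(t,z)=z-z_j+z_{\alpha_{k\delta t}(j)}$, and $\hat\theta^n(t,z)=\theta^n(t,F^n(t,z))$. *)

theory Defs
  imports "HOL-Analysis.Analysis"
begin

text \<open>A function is smooth if it is (Frechet) differentiable everywhere and every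
directional derivative function is again smooth (coinductively: derivatives of all orders exist).\<close>
coinductive smooth3 :: "(real \<times> real \<times> real \<Rightarrow> real) \<Rightarrow> bool" where
  "(\<And>x. (f has_derivative f' x) (at x)) \<Longrightarrow> (\<And>v. smooth3 (\<lambda>x. f' x v)) \<Longrightarrow> smooth3 f"

definition Theta :: "(real \<Rightarrow> real \<Rightarrow> real \<Rightarrow> real) \<Rightarrow> real \<Rightarrow> real \<Rightarrow> real \<Rightarrow> real" where
  "Theta Q w z t = (THE \<theta>. \<theta> + Q \<theta> z t = w)"

text \<open>A configuration: p i = parcel at position i, v i = value at position i (positions 1..n).
  thM j = theta^M_j, the number carried by parcel j.\<close>
type_synonym config = "(nat \<Rightarrow> nat) \<times> (nat \<Rightarrow> real)"

definition zpos :: "nat \<Rightarrow> nat \<Rightarrow> real" where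
  "zpos n i = real i / real n"

definition wet :: "(real \<Rightarrow> real \<Rightarrow> real \<Rightarrow> real) \<Rightarrow> nat \<Rightarrow> (nat \<Rightarrow> real) \<Rightarrow> real
    \<Rightarrow> config \<Rightarrow> nat \<Rightarrow> bool" where
  "wet Q n thM \<tau> c i = (snd c i < Theta Q (thM (fst c i)) (zpos n i) \<tau>)"

definition eligible :: "(real \<Rightarrow> real \<Rightarrow> real \<Rightarrow> real) \<Rightarrow> nat \<Rightarrow> (nat \<Rightarrow> real) \<Rightarrow> real
    \<Rightarrow> config \<Rightarrow> nat \<Rightarrow> nat \<Rightarrow> bool" where
  "eligible Q n thM \<tau> c m i0 =
     (1 \<le> i0 \<and> i0 \<le> m \<and> wet Q n thM \<tau> c i0 \<and>
      (\<forall>i. i0 < i \<and> i \<le> m \<longrightarrow>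
         (\<not> wet Q n thM \<tau> c i \<and> snd c i < Theta Q (thM (fst c i0)) (zpos n i) \<tau>) \<or>
         (wet Q n thM \<tau> c i \<and> thM (fst c i0) > thM (fst c i))))"

definition istar :: "(real \<Rightarrow> real \<Rightarrow> real \<Rightarrow> real) \<Rightarrow> nat \<Rightarrow> (nat \<Rightarrow> real) \<Rightarrow> real
    \<Rightarrow> config \<Rightarrow> nat \<Rightarrow> nat" where
  "istar Q n thM \<tau> c m =
     (GREATEST i. eligible Q n thM \<tau> c m i \<and>
        (\<forall>i'. eligible Q n thM \<tau> c m i' \<longrightarrow> thM (fst c i') \<le> thM (fst c i)))"

definition stage :: "(real \<Rightarrow> real \<Rightarrow> real \<Rightarrow> real) \<Rightarrow> nat \<Rightarrow> (nat \<Rightarrow> real) \<Rightarrow> real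
    \<Rightarrow> nat \<Rightarrow> config \<Rightarrow> config" where
  "stage Q n thM \<tau> m c =
     (if \<exists>i. eligible Q n thM \<tau> c m i then
        (let k = istar Q n thM \<tau> c m; (p, v) = c in
          (\<lambda>i. if i < k \<or> m < i then p i else if i < m then p (Suc i) else p k,
           \<lambda>i. if i < k \<or> m < i then v i else if i < m then v (Suc i)
                else Theta Q (thM (p k)) (zpos n m) \<tau>))
      else c)"

definition time_step :: "(real \<Rightarrow> real \<Rightarrow> real \<Rightarrow> real) \<Rightarrow> nat \<Rightarrow> (nat \<Rightarrow> real) \<Rightarrow> real
    \<Rightarrow> config \<Rightarrow> config" where
  "time_step Q n thM \<tau> c = fold (stage Q n thM \<tau>) (rev [1..<Suc n]) c"

fun config_at :: "(real \<Rightarrow> real \<Rightarrow> real \<Rightarrow> real) \<Rightarrow> nat \<Rightarrow> real \<Rightarrow> (nat \<Rightarrow> real) \<Rightarrow> (nat \<Rightarrow> real)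
    \<Rightarrow> nat \<Rightarrow> config" where
  "config_at Q n dt th0 q 0 = (\<lambda>i. i, th0)"
| "config_at Q n dt th0 q (Suc k) =
     time_step Q n (\<lambda>j. th0 j + q j) (real (Suc k) * dt) (config_at Q n dt th0 q k)"

definition alpha :: "(real \<Rightarrow> real \<Rightarrow> real \<Rightarrow> real) \<Rightarrow> nat \<Rightarrow> real \<Rightarrow> (nat \<Rightarrow> real) \<Rightarrow> (nat \<Rightarrow> real)
    \<Rightarrow> nat \<Rightarrow> nat \<Rightarrow> nat" where
  "alpha Q n dt th0 q k j = (THE i. 1 \<le> i \<and> i \<le> n \<and> fst (config_at Q n dt th0 q k) i = j)"

definition step_idx :: "real \<Rightarrow> real \<Rightarrow> nat" where
  "step_idx dt t = nat \<lfloor>t / dt\<rfloor>"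

definition cell_idx :: "nat \<Rightarrow> real \<Rightarrow> nat" where
  "cell_idx n z = nat \<lfloor>real n * z\<rfloor> + 1"

definition theta_n :: "(real \<Rightarrow> real \<Rightarrow> real \<Rightarrow> real) \<Rightarrow> nat \<Rightarrow> real \<Rightarrow> (nat \<Rightarrow> real) \<Rightarrow> (nat \<Rightarrow> real)
    \<Rightarrow> real \<Rightarrow> real \<Rightarrow> real" where
  "theta_n Q n dt th0 q t z = snd (config_at Q n dt th0 q (step_idx dt t)) (cell_idx n z)"

definition F_n :: "(real \<Rightarrow> real \<Rightarrow> real \<Rightarrow> real) \<Rightarrow> nat \<Rightarrow> real \<Rightarrow> (nat \<Rightarrow> real) \<Rightarrow> (nat \<Rightarrow> real)
    \<Rightarrow> real \<Rightarrow> real \<Rightarrow> real" where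
  "F_n Q n dt th0 q t z =
     z - zpos n (cell_idx n z) + zpos n (alpha Q n dt th0 q (step_idx dt t) (cell_idx n z))"

definition theta_hat :: "(real \<Rightarrow> real \<Rightarrow> real \<Rightarrow> real) \<Rightarrow> nat \<Rightarrow> real \<Rightarrow> (nat \<Rightarrow> real) \<Rightarrow> (nat \<Rightarrow> real)
    \<Rightarrow> real \<Rightarrow> real \<Rightarrow> real" where
  "theta_hat Q n dt th0 q t z = theta_n Q n dt th0 q t (F_n Q n dt th0 q t z)"

end

theory Submission
  imports Defs
begin

lemma partial1:
  assumes d: "(f has_derivative f' (a,b,c)) (at (a,b,c))"
  shows "((\<lambda>x. f (x,b,c)) has_real_derivative f' (a,b,c) (1,0,0)) (at a)"
proof -
  have p: "((\<lambda>x::real. (x,b,c)) has_derivative (\<lambda>h. (h,0,0))) (at a)"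
    by (auto intro!: derivative_eq_intros simp: zero_prod_def)
  have "((\<lambda>x. f (x,b,c)) has_derivative (\<lambda>h. f' (a,b,c) (h,0,0))) (at a)"
    using has_derivative_compose[OF p] d by auto
  moreover have "(\<lambda>h. f' (a,b,c) (h,0,0)) = (*) (f' (a,b,c) (1,0,0))"
  proof
    fix h :: real
    have l: "linear (f' (a,b,c))" using d has_derivative_linear by blast
    show "f' (a,b,c) (h,0,0) = f' (a,b,c) (1,0,0) * h" using linear.scaleR[OF l, of h "(1,0,0)"] by (simp add: mult.commute)
  qed
  ultimately show ?thesis by (simp add: has_field_derivative_def)
qed
lemma partial2:
  assumes d: "(f has_derivative f' (a,b,c)) (at (a,b,c))"
  shows "((\<lambda>x. f (a,x,c)) has_real_derivative f' (a,b,c) (0,1,0)) (at b)"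
proof -
  have p: "((\<lambda>x::real. (a,x,c)) has_derivative (\<lambda>h. (0,h,0))) (at b)"
    by (auto intro!: derivative_eq_intros simp: zero_prod_def)
  have "((\<lambda>x. f (a,x,c)) has_derivative (\<lambda>h. f' (a,b,c) (0,h,0))) (at b)"
    using has_derivative_compose[OF p] d by auto
  moreover have "(\<lambda>h. f' (a,b,c) (0,h,0)) = (*) (f' (a,b,c) (0,1,0))"
  proof
    fix h :: real
    have l: "linear (f' (a,b,c))" using d has_derivative_linear by blast
    show "f' (a,b,c) (0,h,0) = f' (a,b,c) (0,1,0) * h" using linear.scaleR[OF l, of h "(0,1,0)"] by (simp add: mult.commute)
  qed
  ultimately show ?thesis by (simp add: has_field_derivative_def)
qed
lemma smooth3_cont: "smooth3 g \<Longrightarrow> continuous_on UNIV g"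
  by (erule smooth3.cases) (metis continuous_at_imp_continuous_on has_derivative_continuous)

lemma analytic:
  fixes Q :: "real \<Rightarrow> real \<Rightarrow> real \<Rightarrow> real" and T M' :: real
  assumes smooth: "smooth3 (\<lambda>(a, b, c). Q a b c)"
    and dQ_theta: "\<forall>\<theta> z t. \<exists>d. ((\<lambda>x. Q x z t) has_real_derivative d) (at \<theta>) \<and> d > 0"
    and dQ_z: "\<forall>\<theta> z t. \<exists>d. ((\<lambda>y. Q \<theta> y t) has_real_derivative d) (at z) \<and> d < 0"
    and Theta_wd: "\<forall>w z t. \<exists>!\<theta>. \<theta> + Q \<theta> z t = w"
    and T: "T > 0"
  shows "\<exists>c0>0. \<forall>w z z' \<tau>. \<bar>w\<bar> \<le> M' \<longrightarrow> 0 \<le> \<tau> \<longrightarrow> \<tau> \<le> T \<longrightarrow> 0 \<le> z \<longrightarrow> z \<le> z' \<longrightarrow> z' \<le> 1 \<longrightarrow>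
            c0 * (z' - z) \<le> Theta Q w z' \<tau> - Theta Q w z \<tau>"
proof -
  define f where "f = (\<lambda>(a::real, b::real, c::real). Q a b c)"
  obtain f' where fd: "\<And>x. (f has_derivative f' x) (at x)" and fs: "\<And>v. smooth3 (\<lambda>x. f' x v)"
  proof -
    have "smooth3 f" using smooth unfolding f_def .
    then show ?thesis by (rule smooth3.cases) (rule that, blast+)
  qed
  define D1 where "D1 = (\<lambda>x. f' x (1::real,0::real,0::real))"
  define D2 where "D2 = (\<lambda>x. f' x (0::real,1::real,0::real))"
  have D1d: "((\<lambda>x. Q x b c) has_real_derivative D1 (a,b,c)) (at a)" for a b c
    using partial1[of f f' a b c, OF fd] by (simp add: f_def D1_def)
  have D2d: "((\<lambda>x. Q a x c) has_real_derivative D2 (a,b,c)) (at b)" for a b c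
    using partial2[of f f' a b c, OF fd] by (simp add: f_def D2_def)
  have D1pos: "D1 (a,b,c) > 0" for a b c
  proof -
    obtain d where "((\<lambda>x. Q x b c) has_real_derivative d) (at a)" "d > 0" using dQ_theta by blast
    then show ?thesis using DERIV_unique[OF D1d] by simp
  qed
  have D2neg: "D2 (a,b,c) < 0" for a b c
  proof -
    obtain d where "((\<lambda>y. Q a y c) has_real_derivative d) (at b)" "d < 0" using dQ_z by blast
    then show ?thesis using DERIV_unique[OF D2d] by simp
  qed
  have cD1: "continuous_on UNIV D1" unfolding D1_def by (rule smooth3_cont[OF fs])
  have cD2: "continuous_on UNIV D2" unfolding D2_def by (rule smooth3_cont[OF fs])
  have cf: "continuous_on UNIV f" using smooth smooth3_cont unfolding f_def by blast
  have Qmono: "a < b \<Longrightarrow> Q a z t < Q b z t" for a b z t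
    using DERIV_pos_imp_increasing[of a b "\<lambda>x. Q x z t"] dQ_theta by blast
  have Thq: "Theta Q w z t + Q (Theta Q w z t) z t = w" for w z t
    unfolding Theta_def by (rule theI'[OF Theta_wd[rule_format]])
  define K0 where "K0 = {0::real} \<times> ({0..1::real} \<times> {0..T})"
  have K0c: "compact K0" unfolding K0_def by (intro compact_Times compact_Icc) auto
  have K0ne: "K0 \<noteq> {}" unfolding K0_def using T by auto
  obtain x0 where x0: "x0 \<in> K0" "\<And>y. y \<in> K0 \<Longrightarrow> f x0 \<le> f y"
    using continuous_attains_inf[OF K0c K0ne continuous_on_subset[OF cf]] by blast
  obtain x1 where x1: "x1 \<in> K0" "\<And>y. y \<in> K0 \<Longrightarrow> f y \<le> f x1"
    using continuous_attains_sup[OF K0c K0ne continuous_on_subset[OF cf]] by blast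
  define m0 where "m0 = f x0"
  define m1 where "m1 = f x1"
  have m01: "m0 \<le> Q 0 z t \<and> Q 0 z t \<le> m1" if "0 \<le> z" "z \<le> 1" "0 \<le> t" "t \<le> T" for z t
  proof -
    have "(0,z,t) \<in> K0" using that unfolding K0_def by auto
    then show ?thesis using x0(2) x1(2) unfolding m0_def m1_def f_def by fastforce
  qed
  define B where "B = \<bar>M'\<bar> + \<bar>m0\<bar> + \<bar>m1\<bar> + 1"
  have Bpos: "B > 0" unfolding B_def by simp
  have bnd: "\<bar>Theta Q w z t\<bar> \<le> B" if "\<bar>w\<bar> \<le> M'" "0 \<le> z" "z \<le> 1" "0 \<le> t" "t \<le> T" for w z t
  proof (rule ccontr)
    assume nb: "\<not> ?thesis"
    let ?th = "Theta Q w z t"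
    have e: "?th + Q ?th z t = w" by (rule Thq)
    have m: "m0 \<le> Q 0 z t" "Q 0 z t \<le> m1" using m01 that by auto
    show False
    proof (cases "?th > 0")
      case True
      then have "?th > B" using nb by linarith
      moreover have "Q 0 z t < Q ?th z t" using Qmono True by blast
      ultimately show False using e m that unfolding B_def by linarith
    next
      case False
      then have "?th < -B" using nb by linarith
      moreover have "Q ?th z t < Q 0 z t" using Qmono Bpos \<open>?th < -B\<close> by fastforce
      ultimately show False using e m that unfolding B_def by linarith
    qed
  qed
  define K where "K = {-B..B} \<times> ({0..1::real} \<times> {0..T})"
  have Kc: "compact K" unfolding K_def by (intro compact_Times compact_Icc)
  have Kne: "K \<noteq> {}" unfolding K_def using T Bpos by auto
  obtain xa where xa: "xa \<in> K" "\<And>y. y \<in> K \<Longrightarrow> D2 y \<le> D2 xa"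
    using continuous_attains_sup[OF Kc Kne continuous_on_subset[OF cD2]] by blast
  obtain xl where xl: "xl \<in> K" "\<And>y. y \<in> K \<Longrightarrow> D1 y \<le> D1 xl"
    using continuous_attains_sup[OF Kc Kne continuous_on_subset[OF cD1]] by blast
  define a where "a = - D2 xa"
  define L where "L = D1 xl"
  have apos: "a > 0" unfolding a_def using D2neg[of "fst xa" "fst (snd xa)" "snd (snd xa)"] by simp
  have Lpos: "L > 0" unfolding L_def using D1pos[of "fst xl" "fst (snd xl)" "snd (snd xl)"] by simp
  define c0 where "c0 = a / (1 + L)"
  have c0pos: "c0 > 0" unfolding c0_def using apos Lpos by simp
  show ?thesis
  proof (intro exI[of _ c0] conjI c0pos allI impI)
    fix w z z' \<tau> :: real
    assume h: "\<bar>w\<bar> \<le> M'" "0 \<le> \<tau>" "\<tau> \<le> T" "0 \<le> z" "z \<le> z'" "z' \<le> 1"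
    show "c0 * (z' - z) \<le> Theta Q w z' \<tau> - Theta Q w z \<tau>"
    proof (cases "z = z'")
      case True then show ?thesis by simp
    next
      case False
      then have zz: "z < z'" using h by simp
      define th where "th = Theta Q w z \<tau>"
      define th' where "th' = Theta Q w z' \<tau>"
      have b1: "\<bar>th\<bar> \<le> B" unfolding th_def using bnd h by auto
      have b2: "\<bar>th'\<bar> \<le> B" unfolding th'_def using bnd h by auto
      have eq: "th' + Q th' z' \<tau> = th + Q th z \<tau>" unfolding th_def th'_def using Thq by metis
      obtain \<eta> where eta: "z < \<eta>" "\<eta> < z'" "Q th z' \<tau> - Q th z \<tau> = (z' - z) * D2 (th, \<eta>, \<tau>)"
        using MVT2[OF zz, of "\<lambda>y. Q th y \<tau>" "\<lambda>y. D2 (th, y, \<tau>)"] D2d by blast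
      have "(th, \<eta>, \<tau>) \<in> K" unfolding K_def using b1 eta h by auto
      then have "D2 (th, \<eta>, \<tau>) \<le> - a" using xa(2) unfolding a_def by auto
      then have "(z' - z) * D2 (th, \<eta>, \<tau>) \<le> (z' - z) * (- a)"
        using zz by (intro mult_left_mono) auto
      then have R: "Q th z \<tau> - Q th z' \<tau> \<ge> a * (z' - z)" using eta(3) by (simp add: algebra_simps)
      have Rp: "a * (z' - z) > 0" using apos zz by simp
      have lt: "th < th'"
      proof (rule ccontr)
        assume "\<not> th < th'"
        then have "th' \<le> th" by simp
        then have "Q th' z' \<tau> \<le> Q th z' \<tau>" using Qmono by (cases "th' = th") (auto simp: less_le_not_le)
        then show False using eq R Rp \<open>th' \<le> th\<close> by linarith
      qed
      obtain \<xi> where xi: "th < \<xi>" "\<xi> < th'" "Q th' z' \<tau> - Q th z' \<tau> = (th' - th) * D1 (\<xi>, z', \<tau>)"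
        using MVT2[OF lt, of "\<lambda>x. Q x z' \<tau>" "\<lambda>x. D1 (x, z', \<tau>)"] D1d by blast
      have "(\<xi>, z', \<tau>) \<in> K" unfolding K_def using b1 b2 xi h by auto
      then have "D1 (\<xi>, z', \<tau>) \<le> L" using xl(2) unfolding L_def by auto
      then have "(th' - th) * (1 + D1 (\<xi>, z', \<tau>)) \<le> (th' - th) * (1 + L)"
        using lt by (intro mult_left_mono) auto
      moreover have "(th' - th) * (1 + D1 (\<xi>, z', \<tau>)) = Q th z \<tau> - Q th z' \<tau>"
        using xi(3) eq by (simp add: algebra_simps)
      ultimately have "a * (z' - z) \<le> (th' - th) * (1 + L)" using R by linarith
      then have "a * (z' - z) / (1 + L) \<le> th' - th" using Lpos by (simp add: divide_le_eq)
      then show ?thesis unfolding c0_def th_def th'_def by (simp add: mult.commute)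
    qed
  qed
qed


definition Inv :: "nat \<Rightarrow> config \<Rightarrow> bool" where
  "Inv n c = bij_betw (fst c) {1..n} {1..n}"

definition Rel :: "nat \<Rightarrow> real \<Rightarrow> config \<Rightarrow> config \<Rightarrow> bool" where
  "Rel n \<kappa> c c' = (\<forall>i\<in>{1..n}. \<exists>i'\<in>{1..n}. fst c' i' = fst c i \<and> snd c i \<le> snd c' i' \<and>
      snd c i - \<kappa> * zpos n i \<le> snd c' i' - \<kappa> * zpos n i')"

lemma Rel_refl: "Rel n \<kappa> c c" unfolding Rel_def by auto

lemma Rel_trans: "Rel n \<kappa> c1 c2 \<Longrightarrow> Rel n \<kappa> c2 c3 \<Longrightarrow> Rel n \<kappa> c1 c3"
  proof -
  assume r1: "Rel n \<kappa> c1 c2" and r2: "Rel n \<kappa> c2 c3"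
  show ?thesis unfolding Rel_def
  proof
    fix i assume i: "i \<in> {1..n}"
    obtain i' where i': "i' \<in> {1..n}" "fst c2 i' = fst c1 i" "snd c1 i \<le> snd c2 i'"
      "snd c1 i - \<kappa> * zpos n i \<le> snd c2 i' - \<kappa> * zpos n i'" using r1 i unfolding Rel_def by blast
    obtain i'' where i'': "i'' \<in> {1..n}" "fst c3 i'' = fst c2 i'" "snd c2 i' \<le> snd c3 i''"
      "snd c2 i' - \<kappa> * zpos n i' \<le> snd c3 i'' - \<kappa> * zpos n i''" using r2 i'(1) unfolding Rel_def by blast
    show "\<exists>i'\<in>{1..n}. fst c3 i' = fst c1 i \<and> snd c1 i \<le> snd c3 i' \<and>
      snd c1 i - \<kappa> * zpos n i \<le> snd c3 i' - \<kappa> * zpos n i'"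
      using i' i'' by (intro bexI[of _ i'']) auto
  qed
qed

lemma istar_props:
  assumes "\<exists>i. eligible Q n thM \<tau> c m i"
  shows "eligible Q n thM \<tau> c m (istar Q n thM \<tau> c m)"
proof -
  let ?S = "{i. eligible Q n thM \<tau> c m i}"
  let ?f = "\<lambda>i. thM (fst c i)"
  have fin: "finite ?S" by (rule finite_subset[of _ "{1..m}"]) (auto simp: eligible_def)
  have ne: "?S \<noteq> {}" using assms by auto
  define M where "M = Max (?f ` ?S)"
  have "M \<in> ?f ` ?S" using Max_in[of "?f ` ?S"] fin ne unfolding M_def by auto
  then obtain i0 where i0: "i0 \<in> ?S" "?f i0 = M" by auto
  have ge: "\<And>i. i \<in> ?S \<Longrightarrow> ?f i \<le> M" unfolding M_def using fin by auto
  let ?P = "\<lambda>i. eligible Q n thM \<tau> c m i \<and>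
        (\<forall>i'. eligible Q n thM \<tau> c m i' \<longrightarrow> thM (fst c i') \<le> thM (fst c i))"
  have "?P i0" using i0 ge by auto
  moreover have bnd: "\<And>y. ?P y \<Longrightarrow> y \<le> m" by (auto simp: eligible_def)
  ultimately have "?P (Greatest ?P)" by (rule GreatestI_nat)
  then show ?thesis unfolding istar_def by simp
qed

lemma stage_Inv_Rel:
  assumes inv: "Inv n c" and m: "1 \<le> m" "m \<le> n" and kap: "\<kappa> \<ge> 0"
    and mono: "\<And>j z z'. j \<in> {1..n} \<Longrightarrow> 0 \<le> z \<Longrightarrow> z \<le> z' \<Longrightarrow> z' \<le> 1 \<Longrightarrow>
        \<kappa> * (z' - z) \<le> Theta Q (thM j) z' \<tau> - Theta Q (thM j) z \<tau>"
  shows "Inv n (stage Q n thM \<tau> m c) \<and> Rel n \<kappa> c (stage Q n thM \<tau> m c)"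
proof (cases "\<exists>i. eligible Q n thM \<tau> c m i")
  case False
  then show ?thesis using inv Rel_refl by (simp add: stage_def)
next
  case True
  obtain p v where c: "c = (p, v)" by fastforce
  define k where "k = istar Q n thM \<tau> c m"
  have el: "eligible Q n thM \<tau> c m k" using istar_props[OF True] unfolding k_def .
  then have k: "1 \<le> k" "k \<le> m" and wetk: "v k < Theta Q (thM (p k)) (zpos n k) \<tau>"
    unfolding eligible_def wet_def by (auto simp: c)
  define \<sigma> where "\<sigma> = (\<lambda>i. if i < k \<or> m < i then i else if i < m then Suc i else k)"
  define p' where "p' = (\<lambda>i. if i < k \<or> m < i then p i else if i < m then p (Suc i) else p k)"
  define v' where "v' = (\<lambda>i. if i < k \<or> m < i then v i else if i < m then v (Suc i)
                else Theta Q (thM (p k)) (zpos n m) \<tau>)"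
  have st: "stage Q n thM \<tau> m c = (p', v')"
    using True unfolding stage_def p'_def v'_def k_def c by (simp add: Let_def)
  have pbij: "bij_betw p {1..n} {1..n}" using inv c by (simp add: Inv_def)
  have p'\<sigma>: "p' = p \<circ> \<sigma>" unfolding p'_def \<sigma>_def by (auto simp: fun_eq_iff)
  have \<sigma>inj: "inj_on \<sigma> {1..n}" unfolding \<sigma>_def inj_on_def using k m by auto
  have \<sigma>sub: "\<sigma> ` {1..n} \<subseteq> {1..n}" unfolding \<sigma>_def using k m by auto
  have "\<sigma> ` {1..n} = {1..n}" using endo_inj_surj[OF _ \<sigma>sub \<sigma>inj] by simp
  then have "bij_betw \<sigma> {1..n} {1..n}" using \<sigma>inj by (simp add: bij_betw_def)
  then have "bij_betw p' {1..n} {1..n}" unfolding p'\<sigma> using pbij by (rule bij_betw_trans)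
  then have I: "Inv n (stage Q n thM \<tau> m c)" by (simp add: st Inv_def)
  have zp: "0 \<le> zpos n i" "zpos n i \<le> zpos n i'" "zpos n i' \<le> 1" if "i \<le> i'" "i' \<le> n" for i i'
    using that m by (auto simp: zpos_def divide_right_mono)
  have R: "Rel n \<kappa> c (p', v')"
    unfolding Rel_def c fst_conv snd_conv
  proof
    fix i assume i: "i \<in> {1..n}"
    show "\<exists>i'\<in>{1..n}. p' i' = p i \<and> v i \<le> v' i' \<and> v i - \<kappa> * zpos n i \<le> v' i' - \<kappa> * zpos n i'"
    proof (cases "i < k \<or> m < i")
      case True
      then show ?thesis using i by (intro bexI[of _ i]) (auto simp: p'_def v'_def)
    next
      case False
      show ?thesis
      proof (cases "i = k")
        case True
        have pk: "p k \<in> {1..n}" using pbij k m by (auto simp: bij_betw_def)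
        have z: "0 \<le> zpos n k" "zpos n k \<le> zpos n m" "zpos n m \<le> 1" using zp[of k m] k m by auto
        have "\<kappa> * (zpos n m - zpos n k) \<le> Theta Q (thM (p k)) (zpos n m) \<tau> - Theta Q (thM (p k)) (zpos n k) \<tau>"
          using mono[OF pk z] .
        moreover have "0 \<le> \<kappa> * (zpos n m - zpos n k)" using kap z by simp
        ultimately show ?thesis using True wetk m k
          by (intro bexI[of _ m]) (auto simp: p'_def v'_def algebra_simps)
      next
        case False
        then have ki: "k < i" "i \<le> m" using \<open>\<not> (i < k \<or> m < i)\<close> by auto
        then obtain i1 where i1: "i = Suc i1" by (cases i) auto
        have "zpos n i1 \<le> zpos n i" using zp[of i1 i] i i1 by auto
        then have "\<kappa> * zpos n i1 \<le> \<kappa> * zpos n i" using kap by (simp add: mult_left_mono)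
        then show ?thesis using ki i1 k m
          by (intro bexI[of _ i1]) (auto simp: p'_def v'_def)
      qed
    qed
  qed
  show ?thesis using I R st by simp
qed

lemma fold_Inv_Rel:
  assumes kap: "\<kappa> \<ge> 0"
    and mono: "\<And>j z z'. j \<in> {1..n} \<Longrightarrow> 0 \<le> z \<Longrightarrow> z \<le> z' \<Longrightarrow> z' \<le> 1 \<Longrightarrow>
        \<kappa> * (z' - z) \<le> Theta Q (thM j) z' \<tau> - Theta Q (thM j) z \<tau>"
  shows "set ms \<subseteq> {1..n} \<Longrightarrow> Inv n c \<Longrightarrow>
     Inv n (fold (stage Q n thM \<tau>) ms c) \<and> Rel n \<kappa> c (fold (stage Q n thM \<tau>) ms c)"
proof (induction ms arbitrary: c)
  case Nil
  then show ?case by (simp add: Rel_refl)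
next
  case (Cons m ms)
  have "Inv n (stage Q n thM \<tau> m c) \<and> Rel n \<kappa> c (stage Q n thM \<tau> m c)"
    using stage_Inv_Rel[OF Cons.prems(2) _ _ kap mono] Cons.prems(1) by auto
  moreover then have "Inv n (fold (stage Q n thM \<tau>) ms (stage Q n thM \<tau> m c)) \<and>
     Rel n \<kappa> (stage Q n thM \<tau> m c) (fold (stage Q n thM \<tau>) ms (stage Q n thM \<tau> m c))"
    using Cons.IH Cons.prems(1) by auto
  ultimately show ?case by (simp, blast intro: Rel_trans)
qed

lemma step_Inv_Rel:
  assumes kap: "\<kappa> \<ge> 0"
    and mono: "\<And>j z z'. j \<in> {1..n} \<Longrightarrow> 0 \<le> z \<Longrightarrow> z \<le> z' \<Longrightarrow> z' \<le> 1 \<Longrightarrow>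
        \<kappa> * (z' - z) \<le> Theta Q (thM j) z' \<tau> - Theta Q (thM j) z \<tau>"
    and "Inv n c"
  shows "Inv n (time_step Q n thM \<tau> c) \<and> Rel n \<kappa> c (time_step Q n thM \<tau> c)"
  unfolding time_step_def by (rule fold_Inv_Rel[OF kap mono]) (use assms in auto)

lemma config_Inv_Rel:
  assumes kap: "\<kappa> \<ge> 0" and dt: "dt > 0"
    and mono: "\<And>j z z' \<tau>. j \<in> {1..n} \<Longrightarrow> 0 \<le> \<tau> \<Longrightarrow> \<tau> \<le> T \<Longrightarrow> 0 \<le> z \<Longrightarrow> z \<le> z' \<Longrightarrow> z' \<le> 1 \<Longrightarrow>
        \<kappa> * (z' - z) \<le> Theta Q (th0 j + q j) z' \<tau> - Theta Q (th0 j + q j) z \<tau>"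
  shows "real k2 * dt \<le> T \<Longrightarrow> Inv n (config_at Q n dt th0 q k2) \<and>
     (\<forall>k1\<le>k2. Rel n \<kappa> (config_at Q n dt th0 q k1) (config_at Q n dt th0 q k2))"
proof (induction k2)
  case 0
  have "bij_betw (\<lambda>i::nat. i) {1..n} {1..n}" by (simp add: bij_betw_def)
  then show ?case by (simp add: Inv_def Rel_refl)
next
  case (Suc k)
  have "real k * dt \<le> real (Suc k) * dt" using dt by simp
  then have IH: "Inv n (config_at Q n dt th0 q k) \<and>
     (\<forall>k1\<le>k. Rel n \<kappa> (config_at Q n dt th0 q k1) (config_at Q n dt th0 q k))"
  proof -
    have "real k * dt \<le> T" using Suc.prems \<open>real k * dt \<le> real (Suc k) * dt\<close> by linarith
    then show ?thesis using Suc.IH by blast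
  qed
  have t: "0 \<le> real (Suc k) * dt" "real (Suc k) * dt \<le> T" using dt Suc.prems by auto
  have S: "Inv n (config_at Q n dt th0 q (Suc k)) \<and>
      Rel n \<kappa> (config_at Q n dt th0 q k) (config_at Q n dt th0 q (Suc k))"
    unfolding config_at.simps
    by (rule step_Inv_Rel[OF kap _ conjunct1[OF IH]]) (rule mono, use t in auto)
  show ?case
  proof (intro conjI allI impI)
    show "Inv n (config_at Q n dt th0 q (Suc k))" using S by simp
    fix k1 assume "k1 \<le> Suc k"
    then show "Rel n \<kappa> (config_at Q n dt th0 q k1) (config_at Q n dt th0 q (Suc k))"
    proof (cases "k1 = Suc k")
      case True then show ?thesis by (simp add: Rel_refl)
    next
      case False
      then have "k1 \<le> k" using \<open>k1 \<le> Suc k\<close> by simp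
      then show ?thesis using IH S Rel_trans by blast
    qed
  qed
qed

lemma cell_range:
  assumes n: "n \<ge> 1" and z: "0 \<le> z" "z < 1"
  shows "cell_idx n z \<in> {1..n}"
proof -
  have "real n * z < real n * 1" using n z by (intro mult_strict_left_mono) auto
  then have a: "\<lfloor>real n * z\<rfloor> < int n" by linarith
  have b: "0 \<le> \<lfloor>real n * z\<rfloor>" using z by simp
  have "nat \<lfloor>real n * z\<rfloor> < n" using a b by linarith
  then show ?thesis unfolding cell_idx_def by simp
qed


lemma alpha_eq:
  assumes "Inv n (config_at Q n dt th0 q k)" "i \<in> {1..n}" "fst (config_at Q n dt th0 q k) i = j"
  shows "alpha Q n dt th0 q k j = i"
  unfolding alpha_def
proof (rule the_equality)
  show "1 \<le> i \<and> i \<le> n \<and> fst (config_at Q n dt th0 q k) i = j" using assms(2,3) by auto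
  fix i' assume h: "1 \<le> i' \<and> i' \<le> n \<and> fst (config_at Q n dt th0 q k) i' = j"
  have inj: "inj_on (fst (config_at Q n dt th0 q k)) {1..n}" using assms(1) unfolding Inv_def bij_betw_def by blast
  have "i' \<in> {1..n}" using h by simp
  from inj_onD[OF inj _ this assms(2)] show "i' = i" using h assms(3) by argo
qed

lemma cell_lemma:
  assumes n: "n \<ge> 1" and z: "0 \<le> z" "z < 1" and i: "1 \<le> i" "i \<le> n"
  shows "cell_idx n (z - zpos n (cell_idx n z) + zpos n i) = i"
proof -
  define j where "j = cell_idx n z"
  have nz: "0 \<le> real n * z" using n z by simp
  have fl0: "0 \<le> \<lfloor>real n * z\<rfloor>" using nz by simp
  have fl: "\<lfloor>real n * z\<rfloor> = int j - 1"
    using fl0 unfolding cell_idx_def j_def by simp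
  have "real n * (z - zpos n j + zpos n i) = real n * z - real j + real i"
    using n unfolding zpos_def by (simp add: field_simps)
  also have "\<dots> = real n * z + of_int (int i - int j)" by simp
  finally have "\<lfloor>real n * (z - zpos n j + zpos n i)\<rfloor> = \<lfloor>real n * z + of_int (int i - int j)\<rfloor>"
    by simp
  also have "\<dots> = \<lfloor>real n * z\<rfloor> + (int i - int j)" by (rule floor_add_int[symmetric])
  finally have "\<lfloor>real n * (z - zpos n j + zpos n i)\<rfloor> = int i - 1" using fl by simp
  then have "cell_idx n (z - zpos n j + zpos n i) = nat (int i - 1) + 1" unfolding cell_idx_def by simp
  then show ?thesis using i unfolding j_def by simp
qed
theorem lemma4p13:
  fixes Q :: "real \<Rightarrow> real \<Rightarrow> real \<Rightarrow> real" and T M' :: real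
  assumes smooth: "smooth3 (\<lambda>(a, b, c). Q a b c)"
    and dQ_theta: "\<forall>\<theta> z t. \<exists>d. ((\<lambda>x. Q x z t) has_real_derivative d) (at \<theta>) \<and> d > 0"
    and dQ_z: "\<forall>\<theta> z t. \<exists>d. ((\<lambda>y. Q \<theta> y t) has_real_derivative d) (at z) \<and> d < 0"
    and Theta_wd: "\<forall>w z t. \<exists>!\<theta>. \<theta> + Q \<theta> z t = w"
    and dTheta_w: "\<forall>w z t. \<exists>d. ((\<lambda>x. Theta Q x z t) has_real_derivative d) (at w) \<and> d > 0"
    and dTheta_z: "\<forall>w z t. \<exists>d. ((\<lambda>y. Theta Q w y t) has_real_derivative d) (at z) \<and> d > 0"
    and T: "T > 0"
  shows "\<exists>C>0. \<forall>(n::nat) (dt::real) (th0::nat \<Rightarrow> real) (q::nat \<Rightarrow> real).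
           1 \<le> n \<longrightarrow> dt > 0 \<longrightarrow>
           (\<forall>i j. 1 \<le> i \<longrightarrow> i \<le> j \<longrightarrow> j \<le> n \<longrightarrow> th0 i \<le> th0 j) \<longrightarrow>
           (\<forall>j. 1 \<le> j \<longrightarrow> j \<le> n \<longrightarrow> q j \<le> Q (th0 j) (zpos n j) 0) \<longrightarrow>
           M' = (MAX j\<in>{1..n}. \<bar>th0 j\<bar>) + (MAX j\<in>{1..n}. \<bar>q j\<bar>) \<longrightarrow>
           (\<forall>s t z. 0 \<le> s \<longrightarrow> s < t \<longrightarrow> t < T \<longrightarrow> 0 \<le> z \<longrightarrow> z < 1 \<longrightarrow>
              max (F_n Q n dt th0 q t z - F_n Q n dt th0 q s z) 0
                \<le> C * (theta_hat Q n dt th0 q t z - theta_hat Q n dt th0 q s z))"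
proof -
  obtain c0 where c0: "c0 > 0" and c0p: "\<And>w z z' \<tau>. \<bar>w\<bar> \<le> M' \<Longrightarrow> 0 \<le> \<tau> \<Longrightarrow> \<tau> \<le> T \<Longrightarrow> 0 \<le> z \<Longrightarrow> z \<le> z' \<Longrightarrow> z' \<le> 1 \<Longrightarrow>
            c0 * (z' - z) \<le> Theta Q w z' \<tau> - Theta Q w z \<tau>"
    using analytic[OF smooth dQ_theta dQ_z Theta_wd T, of M'] by blast
  show ?thesis
  proof (intro exI[of _ "1 / c0"] conjI allI impI)
    show "1 / c0 > 0" using c0 by simp
    fix n :: nat and dt :: real and th0 q :: "nat \<Rightarrow> real" and s t z :: real
    assume n: "1 \<le> n" and dt: "dt > 0"
      and "\<forall>i j. 1 \<le> i \<longrightarrow> i \<le> j \<longrightarrow> j \<le> n \<longrightarrow> th0 i \<le> th0 j"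
      and "\<forall>j. 1 \<le> j \<longrightarrow> j \<le> n \<longrightarrow> q j \<le> Q (th0 j) (zpos n j) 0"
      and M': "M' = (MAX j\<in>{1..n}. \<bar>th0 j\<bar>) + (MAX j\<in>{1..n}. \<bar>q j\<bar>)"
      and st: "0 \<le> s" "s < t" "t < T" and z: "0 \<le> z" "z < 1"
    have thMb: "\<bar>th0 j + q j\<bar> \<le> M'" if "j \<in> {1..n}" for j
    proof -
      have "\<bar>th0 j\<bar> \<le> (MAX j\<in>{1..n}. \<bar>th0 j\<bar>)" using that by (intro Max_ge) auto
      moreover have "\<bar>q j\<bar> \<le> (MAX j\<in>{1..n}. \<bar>q j\<bar>)" using that by (intro Max_ge) auto
      ultimately show ?thesis unfolding M' by linarith
    qed
    have mono: "\<And>j z z' \<tau>. j \<in> {1..n} \<Longrightarrow> 0 \<le> \<tau> \<Longrightarrow> \<tau> \<le> T \<Longrightarrow> 0 \<le> z \<Longrightarrow> z \<le> z' \<Longrightarrow> z' \<le> 1 \<Longrightarrow>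
        c0 * (z' - z) \<le> Theta Q (th0 j + q j) z' \<tau> - Theta Q (th0 j + q j) z \<tau>"
      using c0p thMb by blast
    define ks where "ks = step_idx dt s"
    define kt where "kt = step_idx dt t"
    have "s / dt \<le> t / dt" using st dt by (simp add: divide_right_mono)
    then have kskt: "ks \<le> kt" unfolding ks_def kt_def step_idx_def by (intro nat_mono floor_mono)
    have "0 \<le> t / dt" using st dt by simp
    then have "real kt \<le> t / dt" unfolding kt_def step_idx_def by linarith
    then have "real kt * dt \<le> t" using dt by (simp add: pos_le_divide_eq)
    then have ktT: "real kt * dt \<le> T" using st by linarith
    have "real ks * dt \<le> real kt * dt" using kskt dt by (intro mult_right_mono) auto
    then have ksT: "real ks * dt \<le> T" using ktT by linarith
    have CR: "\<And>k2. real k2 * dt \<le> T \<Longrightarrow> Inv n (config_at Q n dt th0 q k2) \<and>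
       (\<forall>k1\<le>k2. Rel n c0 (config_at Q n dt th0 q k1) (config_at Q n dt th0 q k2))"
      by (rule config_Inv_Rel[OF less_imp_le[OF c0] dt]) (rule mono, assumption+)
    define cs where "cs = config_at Q n dt th0 q ks"
    define ct where "ct = config_at Q n dt th0 q kt"
    have Is: "Inv n cs" using CR[OF ksT] unfolding cs_def by blast
    have It: "Inv n ct" using CR[OF ktT] unfolding ct_def by blast
    have R: "Rel n c0 cs ct" using CR[OF ktT] kskt unfolding cs_def ct_def by blast
    define j where "j = cell_idx n z"
    have j: "j \<in> {1..n}" unfolding j_def using cell_range n z by blast
    have "j \<in> fst cs ` {1..n}" using Is j unfolding Inv_def bij_betw_def by simp
    then obtain i where i: "i \<in> {1..n}" "fst cs i = j" by auto
    obtain i' where i': "i' \<in> {1..n}" "fst ct i' = j" "snd cs i \<le> snd ct i'"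
      "snd cs i - c0 * zpos n i \<le> snd ct i' - c0 * zpos n i'"
    proof -
      have "\<exists>i'\<in>{1..n}. fst ct i' = fst cs i \<and> snd cs i \<le> snd ct i' \<and>
        snd cs i - c0 * zpos n i \<le> snd ct i' - c0 * zpos n i'" using R i(1) unfolding Rel_def by blast
      then show ?thesis using that i(2) by auto
    qed
    have as: "alpha Q n dt th0 q ks j = i" using alpha_eq Is i unfolding cs_def by blast
    have at: "alpha Q n dt th0 q kt j = i'" using alpha_eq It i' unfolding ct_def by blast
    have Fs: "F_n Q n dt th0 q s z = z - zpos n j + zpos n i"
      unfolding F_n_def as[unfolded ks_def] j_def[symmetric] ..
    have Ft: "F_n Q n dt th0 q t z = z - zpos n j + zpos n i'"
      unfolding F_n_def at[unfolded kt_def] j_def[symmetric] ..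
    have hs: "theta_hat Q n dt th0 q s z = snd cs i"
      unfolding theta_hat_def theta_n_def Fs j_def cs_def ks_def
      using cell_lemma[OF n z] i by simp
    have ht: "theta_hat Q n dt th0 q t z = snd ct i'"
      unfolding theta_hat_def theta_n_def Ft j_def ct_def kt_def
      using cell_lemma[OF n z] i' by simp
    have e1: "0 \<le> snd ct i' - snd cs i" using i' by simp
    have e2: "c0 * (zpos n i' - zpos n i) \<le> snd ct i' - snd cs i" using i' by (simp add: algebra_simps)
    have "max (zpos n i' - zpos n i) 0 \<le> 1 / c0 * (snd ct i' - snd cs i)"
    proof -
      have "0 \<le> 1 / c0 * (snd ct i' - snd cs i)" using c0 e1 by simp
      moreover have "zpos n i' - zpos n i \<le> 1 / c0 * (snd ct i' - snd cs i)"
        using e2 c0 by (simp add: field_simps)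
      ultimately show ?thesis by simp
    qed
    then show "max (F_n Q n dt th0 q t z - F_n Q n dt th0 q s z) 0
                \<le> 1 / c0 * (theta_hat Q n dt th0 q t z - theta_hat Q n dt th0 q s z)"
      unfolding Fs Ft hs ht by simp
  qed
qed

end
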